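(* Let $k\ge 1$ and let $A_1,\dots,A_{2k-1}$ be (possibly empty) balanced parenthesis sequences inducing ordered matchings $M_1,\dots,M_{2k-1}$ respectively. Define parenthesis sequences $B_k=(A_k)$ and, for $j=k-1,k-2,\dots,1$, $B_j=(A_j\,B_{j+1}\,A_{2k-j})$ (concatenation inside one new pair of parentheses), so that $B_1=(A_1(A_2(\cdots(A_{k-1}(A_k)A_{k+1})\cdots)A_{2k-2})A_{2k-1})$. Then $B_1$ is a balanced parenthesis sequence; let $M$ be the matching it induces. Then $$r_<(M,K_3)\le r_<(NM_{k+t},K_3),\qquad\text{where } t=\sum_{i=1}^{k}\max\big(r_<(M_i,K_3),\,r_<(M_{2k-i},K_3)\big).$$
   Context: An ordered graph on $[N]$ is a graph with vertex set $\{1,\dots,N\}$ equipped with the natural order. Given a red/blue coloring of the edges of the complete graph on $[N]$, a red (ordered) copy of an ordered graph $G$ on $[p]$ is a strictly increasing map $\varphi:[p]\to[N]$ such that $\varphi(u)\varphi(v)$ is red for every edge $uv$ of $G$. The ordered Ramsey number $r_<(G,K_3)$ is the smallest $N$ such that every red/blue coloring of the edges of the complete graph on $[N]$ contains either a red ordered copy of $G$ or a blue triangle. A balanced parenthesis sequence of length $2m$ is a string of $m$ open and $m$ close parentheses that is correctly matched; it induces the ordered matching on $[2m]$ whose edges are the pairs $\{i,j\}$ such that the parenthesis in position $i$ is an open parenthesis matched with the close parenthesis in position $j$. The empty sequence induces the empty matching on $0$ vertices. The nested matching $NM_k$ is the ordered graph on $[2k]$ in which $\{i,j\}$ is an edge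 if and only if $i+j=2k+1$. *)

theory Defs
  imports Main
begin

text \<open>Ordered graphs on [p] = {1..p} are given by p and an edge predicate E,
  where only E u v with 1 \<le> u < v \<le> p is consulted. A red/blue colouring of
  the complete graph on [N] is a predicate red, where the edge {i,j} with i < j
  is red iff red i j (and blue otherwise).\<close>

definition has_red_copy :: "nat \<Rightarrow> (nat \<Rightarrow> nat \<Rightarrow> bool) \<Rightarrow> nat \<Rightarrow> (nat \<Rightarrow> nat \<Rightarrow> bool) \<Rightarrow> bool" where
  "has_red_copy p E N red \<longleftrightarrow>
     (\<exists>\<phi>. (\<forall>u\<in>{1..p}. \<phi> u \<in> {1..N}) \<and> strict_mono_on {1..p} \<phi> \<and>
          (\<forall>u v. 1 \<le> u \<and> u < v \<and> v \<le> p \<and> E u v \<longrightarrow> red (\<phi> u) (\<phi> v)))"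

definition has_blue_triangle :: "nat \<Rightarrow> (nat \<Rightarrow> nat \<Rightarrow> bool) \<Rightarrow> bool" where
  "has_blue_triangle N red \<longleftrightarrow>
     (\<exists>a b c. 1 \<le> a \<and> a < b \<and> b < c \<and> c \<le> N \<and> \<not> red a b \<and> \<not> red a c \<and> \<not> red b c)"

definition ord_ramsey_K3 :: "nat \<Rightarrow> (nat \<Rightarrow> nat \<Rightarrow> bool) \<Rightarrow> nat" where
  "ord_ramsey_K3 p E =
     (LEAST N. \<forall>red. has_red_copy p E N red \<or> has_blue_triangle N red)"

text \<open>Parenthesis sequences: True = open parenthesis, False = close parenthesis.\<close>
definition depth :: "bool list \<Rightarrow> int" where
  "depth xs = (\<Sum>b\<leftarrow>xs. if b then 1 else -1)"

definition balanced :: "bool list \<Rightarrow> bool" where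
  "balanced xs \<longleftrightarrow> (\<forall>n \<le> length xs. depth (take n xs) \<ge> 0) \<and> depth xs = 0"

text \<open>Positions are 1-based: position i holds xs ! (i - 1).\<close>
definition matched :: "bool list \<Rightarrow> nat \<Rightarrow> nat \<Rightarrow> bool" where
  "matched xs i j \<longleftrightarrow> 1 \<le> i \<and> i < j \<and> j \<le> length xs \<and>
     xs ! (i - 1) \<and> \<not> xs ! (j - 1) \<and> balanced (take (j - i - 1) (drop i xs))"

text \<open>The ordered matching induced by xs lives on [length xs] with edge predicate matched xs.\<close>

definition nested_matching :: "nat \<Rightarrow> nat \<Rightarrow> nat \<Rightarrow> bool" where
  "nested_matching k i j \<longleftrightarrow> i + j = 2 * k + 1"

text \<open>nestB A k d is the sequence B_(k-d): B_k = (A_k), B_j = (A_j B_(j+1) A_(2k-j)).\<close>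
fun nestB :: "(nat \<Rightarrow> bool list) \<Rightarrow> nat \<Rightarrow> nat \<Rightarrow> bool list" where
  "nestB A k 0 = [True] @ A k @ [False]"
| "nestB A k (Suc d) = [True] @ A (k - Suc d) @ nestB A k d @ A (k + Suc d) @ [False]"

end

theory Submission
  imports Defs "HOL-Library.Ramsey"
begin


lemma depth_append[simp]: "depth (xs @ ys) = depth xs + depth ys"
  by (simp add: depth_def)
lemma depth_Nil[simp]: "depth [] = 0" by (simp add: depth_def)
lemma depth_Cons[simp]: "depth (b # xs) = (if b then 1 else -1) + depth xs"
  by (simp add: depth_def)

lemma balanced_append:
  assumes "balanced X" "balanced Y" shows "balanced (X @ Y)"
  unfolding balanced_def
proof (intro conjI allI impI)
  fix n assume "n \<le> length (X @ Y)"
  show "depth (take n (X @ Y)) \<ge> 0"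
  proof (cases "n \<le> length X")
    case True then show ?thesis using assms by (simp add: balanced_def)
  next
    case False
    then have "take n (X @ Y) = X @ take (n - length X) Y" by simp
    moreover have "depth (take (n - length X) Y) \<ge> 0" using assms \<open>n \<le> length (X @ Y)\<close>
      by (simp add: balanced_def)
    ultimately show ?thesis using assms by (simp add: balanced_def)
  qed
qed (use assms in \<open>simp add: balanced_def\<close>)

lemma balanced_wrap:
  assumes "balanced W" shows "balanced (True # W @ [False])"
  unfolding balanced_def
proof (intro conjI allI impI)
  fix n assume n: "n \<le> length (True # W @ [False])"
  show "depth (take n (True # W @ [False])) \<ge> 0"
  proof (cases n)
    case 0 then show ?thesis by simp
  next
    case (Suc m)
    show ?thesis
    proof (cases "m \<le> length W")
      case True
      then have "depth (take m W) \<ge> 0" using assms by (simp add: balanced_def)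
      then show ?thesis using Suc True by simp
    next
      case False
      then have "m = Suc (length W)" using n Suc by simp
      then show ?thesis using Suc assms by (simp add: balanced_def)
    qed
  qed
qed (use assms in \<open>simp add: balanced_def\<close>)

lemma depth_take_open:
  assumes "1 \<le> i" "i \<le> length X" "X ! (i - 1)"
  shows "depth (take i X) = depth (take (i - 1) X) + 1"
proof -
  have "take i X = take (i - 1) X @ [X ! (i - 1)]"
    using assms by (metis Suc_diff_1 Suc_le_lessD le_eq_less_or_eq less_le_trans take_Suc_conv_app_nth zero_less_one)
  then show ?thesis using assms by simp
qed

lemma depth_take_drop: "depth X = depth (take i X) + depth (drop i X)"
  by (metis append_take_drop_id depth_append)

lemma matched_append:
  assumes bal: "balanced X" and m: "matched (X @ Y) i j"
  shows "(j \<le> length X \<and> matched X i j) \<or> (length X < i \<and> matched Y (i - length X) (j - length X))"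
proof -
  from m have i1: "1 \<le> i" and ij: "i < j" and jl: "j \<le> length (X @ Y)"
    and o: "(X @ Y) ! (i - 1)" and c: "\<not> (X @ Y) ! (j - 1)"
    and b: "balanced (take (j - i - 1) (drop i (X @ Y)))"
    by (auto simp: matched_def)
  consider "j \<le> length X" | "length X < i" | "i \<le> length X" "length X < j" by linarith
  then show ?thesis
  proof cases
    case 1
    have "take (j - i - 1) (drop i (X @ Y)) = take (j - i - 1) (drop i X)"
      using 1 ij by simp
    moreover have "(X @ Y) ! (i - 1) = X ! (i - 1)" "(X @ Y) ! (j - 1) = X ! (j - 1)"
      using 1 ij i1 by (auto simp: nth_append)
    ultimately show ?thesis using 1 i1 ij o c b by (simp add: matched_def)
  next
    case 2
    have "take (j - i - 1) (drop i (X @ Y)) = take (j - length X - (i - length X) - 1) (drop (i - length X) Y)"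
      using 2 ij by simp
    moreover have "(X @ Y) ! (i - 1) = Y ! (i - length X - 1)" "(X @ Y) ! (j - 1) = Y ! (j - length X - 1)"
      using 2 ij by (auto simp: nth_append)
    ultimately show ?thesis using 2 i1 ij jl o c b by (auto simp: matched_def)
  next
    case 3
    let ?S = "take (j - i - 1) (drop i (X @ Y))"
    have "take (length X - i) ?S = drop i X" using 3 by (simp add: take_drop)
    then have d1: "depth (drop i X) \<ge> 0" using b 3 by (metis balanced_def length_take length_drop min.cobounded1 length_append)
    have "X ! (i - 1)" using o 3 i1 by (simp add: nth_append)
    then have "depth (take i X) = depth (take (i - 1) X) + 1" using depth_take_open i1 3 by blast
    moreover have "depth (take (i - 1) X) \<ge> 0" using bal 3 unfolding balanced_def by (meson diff_le_self le_trans)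
    moreover have "depth X = 0" using bal by (simp add: balanced_def)
    ultimately show ?thesis using d1 depth_take_drop[of X i] by linarith
  qed
qed

lemma take_length_append: "take (length L) (L @ M) = L" by simp

lemma drop_wrap: "1 \<le> i \<Longrightarrow> i \<le> length W + 1 \<Longrightarrow> drop i (True # W @ [False]) = drop (i - 1) W @ [False]"
  by (cases i) auto

lemma nth_wrap: "2 \<le> j \<Longrightarrow> j \<le> length W + 1 \<Longrightarrow> (True # W @ [False]) ! (j - 1) = W ! (j - 2)"
  by (cases j) (auto simp: numeral_2_eq_2 nth_append)

lemma take_snoc_gen: "2 \<le> j \<Longrightarrow> j \<le> length W + 1 \<Longrightarrow> take (j - 1) W = take (j - 2) W @ [W ! (j - 2)]"
proof -
  assume a: "2 \<le> j" "j \<le> length W + 1"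
  then obtain m where m: "j = Suc (Suc m)" by (metis add_2_eq_Suc le_Suc_ex)
  then show ?thesis using a take_Suc_conv_app_nth[of m W] by simp
qed

lemma matched_wrap:
  assumes bal: "balanced W" and m: "matched (True # W @ [False]) i j"
  shows "(i = 1 \<and> j = length W + 2) \<or> (2 \<le> i \<and> matched W (i - 1) (j - 1))"
proof -
  let ?xs = "True # W @ [False]"
  from m have i1: "1 \<le> i" and ij: "i < j" and jl: "j \<le> length W + 2"
    and o: "?xs ! (i - 1)" and c: "\<not> ?xs ! (j - 1)"
    and b: "balanced (take (j - i - 1) (drop i ?xs))"
    by (auto simp: matched_def)
  have dW: "depth W = 0" and pW: "\<And>n. n \<le> length W \<Longrightarrow> depth (take n W) \<ge> 0"
    using bal by (auto simp: balanced_def)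
  show ?thesis
  proof (cases "i = 1")
    case True
    show ?thesis
    proof (rule ccontr)
      assume "\<not> ?thesis"
      then have jW: "j \<le> length W + 1" using True jl by auto
      have j2: "2 \<le> j" using True ij by simp
      have S: "take (j - i - 1) (drop i ?xs) = take (j - 2) W" using True jW j2 by (simp add: numeral_2_eq_2)
      have "?xs ! (j - 1) = W ! (j - 2)" using nth_wrap j2 jW by simp
      then have cW: "\<not> W ! (j - 2)" using c by simp
      have "take (j - 1) W = take (j - 2) W @ [W ! (j - 2)]" using take_snoc_gen j2 jW by simp
      then have "depth (take (j - 1) W) = depth (take (j - 2) W) - 1" using cW by simp
      moreover have "depth (take (j - 2) W) = 0" using b S by (simp add: balanced_def)
      moreover have "depth (take (j - 1) W) \<ge> 0" using pW jW by simp
      ultimately show False by simp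
    qed
  next
    case False
    then have i2: "2 \<le> i" using i1 by simp
    have xi: "?xs ! (i - 1) = (W @ [False]) ! (i - 2)" using i2
      by (cases i) (auto simp: numeral_2_eq_2)
    have iW: "i \<le> length W + 1"
    proof (rule ccontr)
      assume "\<not> ?thesis" then have "i - 2 = length W" using ij jl by simp
      then show False using o xi by simp
    qed
    have oW: "W ! (i - 2)" using o xi iW i2 by (simp add: nth_append)
    show ?thesis
    proof (cases "j \<le> length W + 1")
      case True
      have xj: "?xs ! (j - 1) = W ! (j - 2)" using nth_wrap True ij i2 by simp
      have D: "drop i ?xs = drop (i - 1) W @ [False]" using i2 iW by (intro drop_wrap) auto
      have S: "take (j - i - 1) (drop i ?xs) = take (j - 1 - (i - 1) - 1) (drop (i - 1) W)"
        unfolding D using True i2 ij by simp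
      have e1: "i - 1 - 1 = i - 2" and e2: "j - 1 - 1 = j - 2" by auto
      have "matched W (i - 1) (j - 1)"
        unfolding matched_def e1 e2
      proof (intro conjI)
        show "1 \<le> i - 1" using i2 by simp
        show "i - 1 < j - 1" using i2 ij by simp
        show "j - 1 \<le> length W" using True by simp
        show "W ! (i - 2)" by (rule oW)
        show "\<not> W ! (j - 2)" using xj c by simp
        show "balanced (take (j - 1 - (i - 1) - 1) (drop (i - 1) W))" using S b by simp
      qed
      then show ?thesis using i2 by simp
    next
      case False
      then have jj: "j = length W + 2" using jl by simp
      have D: "drop i ?xs = drop (i - 1) W @ [False]" using i2 iW by (intro drop_wrap) auto
      have L: "j - i - 1 = length (drop (i - 1) W)" using jj i2 iW by simp
      have S: "take (j - i - 1) (drop i ?xs) = drop (i - 1) W" unfolding D L by (rule take_length_append)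
      have "depth (take (i - 1) W) = depth (take (i - 2) W) + 1"
        using depth_take_open[of "i - 1" W] oW i2 iW by (simp add: numeral_2_eq_2)
      moreover have "depth (take (i - 2) W) \<ge> 0" using iW by (intro pW) simp
      moreover have "depth (drop (i - 1) W) = 0" using b S by (simp add: balanced_def)
      ultimately have False using dW depth_take_drop[of W "i - 1"] by linarith
      then show ?thesis ..
    qed
  qed
qed


definition cp :: "bool list \<Rightarrow> (nat \<Rightarrow> nat \<Rightarrow> bool) \<Rightarrow> (nat \<Rightarrow> nat) \<Rightarrow> nat set \<Rightarrow> bool" where
  "cp xs red f S \<longleftrightarrow> (\<forall>u\<in>{1..length xs}. f u \<in> S) \<and>
     (\<forall>u v. 1 \<le> u \<and> u < v \<and> v \<le> length xs \<longrightarrow> f u < f v) \<and>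
     (\<forall>u v. matched xs u v \<longrightarrow> red (f u) (f v))"

lemma cp_mono: "cp xs red f S \<Longrightarrow> S \<subseteq> S' \<Longrightarrow> cp xs red f S'"
  unfolding cp_def by blast

lemma cp_append:
  assumes bal: "balanced X" and cX: "cp X red f S1" and cY: "cp Y red g S2"
    and ord: "\<forall>x\<in>S1. \<forall>y\<in>S2. x < y"
  shows "cp (X @ Y) red (\<lambda>u. if u \<le> length X then f u else g (u - length X)) (S1 \<union> S2)"
proof -
  let ?h = "\<lambda>u. if u \<le> length X then f u else g (u - length X)"
  have fr: "\<And>u. 1 \<le> u \<Longrightarrow> u \<le> length X \<Longrightarrow> f u \<in> S1" using cX by (auto simp: cp_def)
  have gr: "\<And>u. 1 \<le> u \<Longrightarrow> u \<le> length Y \<Longrightarrow> g u \<in> S2" using cY by (auto simp: cp_def)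
  have fm: "\<And>u v. 1 \<le> u \<Longrightarrow> u < v \<Longrightarrow> v \<le> length X \<Longrightarrow> f u < f v" using cX by (auto simp: cp_def)
  have gm: "\<And>u v. 1 \<le> u \<Longrightarrow> u < v \<Longrightarrow> v \<le> length Y \<Longrightarrow> g u < g v" using cY by (auto simp: cp_def)
  have fe: "\<And>u v. matched X u v \<Longrightarrow> red (f u) (f v)" using cX by (auto simp: cp_def)
  have ge: "\<And>u v. matched Y u v \<Longrightarrow> red (g u) (g v)" using cY by (auto simp: cp_def)
  have A: "\<forall>u\<in>{1..length (X @ Y)}. ?h u \<in> S1 \<union> S2"
  proof
    fix u assume "u \<in> {1..length (X @ Y)}"
    then show "?h u \<in> S1 \<union> S2"
    proof (cases "u \<le> length X")
      case True then show ?thesis using fr \<open>u \<in> _\<close> by auto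
    next
      case False
      then have "1 \<le> u - length X" "u - length X \<le> length Y" using \<open>u \<in> _\<close> by auto
      then show ?thesis using False gr by auto
    qed
  qed
  have B: "\<forall>u v. 1 \<le> u \<and> u < v \<and> v \<le> length (X @ Y) \<longrightarrow> ?h u < ?h v"
  proof (intro allI impI)
    fix u v assume uv: "1 \<le> u \<and> u < v \<and> v \<le> length (X @ Y)"
    consider "v \<le> length X" | "u \<le> length X" "length X < v" | "length X < u" by linarith
    then show "?h u < ?h v"
    proof cases
      case 1 then show ?thesis using uv fm by simp
    next
      case 2
      then have "f u \<in> S1" "g (v - length X) \<in> S2" using uv fr gr by auto
      then show ?thesis using 2 ord by simp
    next
      case 3
      then have "1 \<le> u - length X" "u - length X < v - length X" "v - length X \<le> length Y"
        using uv by auto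
      then show ?thesis using 3 uv gm[of "u - length X" "v - length X"] by simp
    qed
  qed
  have C: "\<forall>u v. matched (X @ Y) u v \<longrightarrow> red (?h u) (?h v)"
  proof (intro allI impI)
    fix u v assume m: "matched (X @ Y) u v"
    then have uv: "u < v" by (simp add: matched_def)
    from matched_append[OF bal m] show "red (?h u) (?h v)"
    proof
      assume "v \<le> length X \<and> matched X u v" then show ?thesis using uv fe by simp
    next
      assume "length X < u \<and> matched Y (u - length X) (v - length X)"
      then show ?thesis using uv ge by simp
    qed
  qed
  show ?thesis using A B C unfolding cp_def by blast
qed

lemma cp_wrap:
  assumes bal: "balanced W" and cW: "cp W red g S"
    and rng: "\<forall>x\<in>S. a < x \<and> x < b" and ab: "a < b" and r: "red a b"
  shows "cp (True # W @ [False]) red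
     (\<lambda>u. if u = 1 then a else if u = length W + 2 then b else g (u - 1)) (insert a (insert b S))"
proof -
  let ?h = "\<lambda>u. if u = 1 then a else if u = length W + 2 then b else g (u - 1)"
  have gr: "\<And>u. 1 \<le> u \<Longrightarrow> u \<le> length W \<Longrightarrow> g u \<in> S" using cW by (auto simp: cp_def)
  have gm: "\<And>u v. 1 \<le> u \<Longrightarrow> u < v \<Longrightarrow> v \<le> length W \<Longrightarrow> g u < g v" using cW by (auto simp: cp_def)
  have ge: "\<And>u v. matched W u v \<Longrightarrow> red (g u) (g v)" using cW by (auto simp: cp_def)
  have A: "\<forall>u\<in>{1..length (True # W @ [False])}. ?h u \<in> insert a (insert b S)"
  proof
    fix u assume u: "u \<in> {1..length (True # W @ [False])}"
    show "?h u \<in> insert a (insert b S)"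
    proof (cases "u = 1 \<or> u = length W + 2")
      case True then show ?thesis by auto
    next
      case False
      then have "g (u - 1) \<in> S" using u gr[of "u - 1"] by auto
      then show ?thesis using False by auto
    qed
  qed
  have B: "\<forall>u v. 1 \<le> u \<and> u < v \<and> v \<le> length (True # W @ [False]) \<longrightarrow> ?h u < ?h v"
  proof (intro allI impI)
    fix u v assume uv: "1 \<le> u \<and> u < v \<and> v \<le> length (True # W @ [False])"
    consider "u = 1" "v = length W + 2" | "u = 1" "v \<noteq> length W + 2"
      | "u \<noteq> 1" "v = length W + 2" | "u \<noteq> 1" "v \<noteq> length W + 2" by blast
    then show "?h u < ?h v"
    proof cases
      case 1 then show ?thesis using ab by simp
    next
      case 2 then have "g (v - 1) \<in> S" using uv gr[of "v - 1"] by auto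
      then show ?thesis using 2 rng uv by auto
    next
      case 3 then have "g (u - 1) \<in> S" using uv gr[of "u - 1"] by auto
      then show ?thesis using 3 rng uv by auto
    next
      case 4 then show ?thesis using uv gm[of "u - 1" "v - 1"] by auto
    qed
  qed
  have C: "\<forall>u v. matched (True # W @ [False]) u v \<longrightarrow> red (?h u) (?h v)"
  proof (intro allI impI)
    fix u v assume m: "matched (True # W @ [False]) u v"
    then have uv: "u < v" "v \<le> length W + 2" by (auto simp: matched_def)
    from matched_wrap[OF bal m] show "red (?h u) (?h v)"
    proof
      assume "u = 1 \<and> v = length W + 2" then show ?thesis using r by simp
    next
      assume a2: "2 \<le> u \<and> matched W (u - 1) (v - 1)"
      then have "v - 1 \<le> length W" by (simp add: matched_def)
      then have "v \<noteq> length W + 2" using uv by simp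
      then show ?thesis using a2 uv ge by simp
    qed
  qed
  show ?thesis using A B C unfolding cp_def by blast
qed



definition goodN :: "nat \<Rightarrow> (nat \<Rightarrow> nat \<Rightarrow> bool) \<Rightarrow> nat \<Rightarrow> bool" where
  "goodN p E N \<longleftrightarrow> (\<forall>red. has_red_copy p E N red \<or> has_blue_triangle N red)"

lemma sorted_list_obtain:
  assumes "finite (R::nat set)"
  obtains l where "sorted_wrt (<) l" "set l = R" "length l = card R"
proof -
  obtain l where l: "sorted_wrt (<) l" "set l = R" using ex1_sorted_list_for_set_if_finite[OF assms] by blast
  then have "distinct l" by (simp add: strict_sorted_iff)
  then have "length l = card R" using l distinct_card by fastforce
  then show ?thesis using l that by blast
qed

lemma ramsey_exists: "\<exists>N. goodN p E N"
proof -
  obtain r where r: "\<forall>(V::nat set) (E'::nat set set). finite V \<and> card V \<ge> r \<longrightarrow>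
    (\<exists>R \<subseteq> V. card R = p \<and> clique R E' \<or> card R = 3 \<and> indep R E')"
    using ramsey2[where 'a=nat, of p 3] by blast
  have "goodN p E r" unfolding goodN_def
  proof
    fix red :: "nat \<Rightarrow> nat \<Rightarrow> bool"
    define E' where "E' = {{a, b} | a b. a < b \<and> red a b}"
    have inE: "red a b" if h1: "a < b" and h2: "{a, b} \<in> E'" for a b
    proof -
      obtain a' b' where ab: "{a, b} = {a', b'}" "a' < b'" "red a' b'" using h2 unfolding E'_def by blast
      then have "a = a' \<and> b = b'" using ab(1,2) h1 unfolding doubleton_eq_iff by auto
      then show ?thesis using ab by simp
    qed
    have notE: "{a, b} \<in> E'" if "a < b" "red a b" for a b using that unfolding E'_def by blast
    obtain R where R: "R \<subseteq> {1..r}" "card R = p \<and> clique R E' \<or> card R = 3 \<and> indep R E'"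
      using r[rule_format, of "{1..r}" E'] by auto
    have fR: "finite R" using R(1) finite_subset by blast
    obtain l where l: "sorted_wrt (<) l" "set l = R" "length l = card R"
      using sorted_list_obtain[OF fR] by blast
    have lR: "\<And>i. i < length l \<Longrightarrow> l ! i \<in> R" using l(2) nth_mem by blast
    have lm: "\<And>i j. i < j \<Longrightarrow> j < length l \<Longrightarrow> l ! i < l ! j" using l(1) sorted_wrt_nth_less by blast
    from R(2) show "has_red_copy p E r red \<or> has_blue_triangle r red"
    proof
      assume c: "card R = p \<and> clique R E'"
      define \<phi> where "\<phi> u = l ! (u - 1)" for u
      have "has_red_copy p E r red" unfolding has_red_copy_def
      proof (intro exI conjI)
        show "\<forall>u\<in>{1..p}. \<phi> u \<in> {1..r}"
          using lR R(1) c l(3) unfolding \<phi>_def by fastforce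
        show "strict_mono_on {1..p} \<phi>"
          unfolding strict_mono_on_def
        proof (intro allI impI)
          fix u v assume uv: "u \<in> {1..p} \<and> v \<in> {1..p} \<and> u < v"
          then have "u - 1 < v - 1" "v - 1 < length l" using c l(3) by auto
          then show "\<phi> u < \<phi> v" unfolding \<phi>_def using lm by blast
        qed
        show "\<forall>u v. 1 \<le> u \<and> u < v \<and> v \<le> p \<and> E u v \<longrightarrow> red (\<phi> u) (\<phi> v)"
        proof (intro allI impI)
          fix u v assume uv: "1 \<le> u \<and> u < v \<and> v \<le> p \<and> E u v"
          have "u - 1 < v - 1" "v - 1 < length l" using uv c l(3) by auto
          then have lt: "\<phi> u < \<phi> v" unfolding \<phi>_def using lm by blast
          have "\<phi> u \<in> R" "\<phi> v \<in> R" unfolding \<phi>_def using lR uv c l(3) by auto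
          then have "{\<phi> u, \<phi> v} \<in> E'" using c lt unfolding clique_def by auto
          then show "red (\<phi> u) (\<phi> v)" using inE lt by blast
        qed
      qed
      then show ?thesis ..
    next
      assume c: "card R = 3 \<and> indep R E'"
      have len: "length l = 3" using c l(3) by simp
      have "has_blue_triangle r red" unfolding has_blue_triangle_def
      proof (intro exI conjI)
        have in3: "l ! 0 \<in> R" "l ! 1 \<in> R" "l ! 2 \<in> R" using lR len by auto
        show "1 \<le> l ! 0" "l ! 2 \<le> r" using in3 R(1) by auto
        show o1: "l ! 0 < l ! 1" "l ! 1 < l ! 2" using lm len by auto
        show "\<not> red (l ! 0) (l ! 1)" using notE[of "l ! 0" "l ! 1"] o1 in3 c unfolding indep_def by auto
        show "\<not> red (l ! 0) (l ! 2)" using notE[of "l ! 0" "l ! 2"] o1 in3 c unfolding indep_def by auto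
        show "\<not> red (l ! 1) (l ! 2)" using notE[of "l ! 1" "l ! 2"] o1 in3 c unfolding indep_def by auto
      qed
      then show ?thesis ..
    qed
  qed
  then show ?thesis by blast
qed

lemma goodN_ramsey: "goodN p E (ord_ramsey_K3 p E)"
  unfolding ord_ramsey_K3_def using ramsey_exists[of p E] unfolding goodN_def
  by (rule LeastI_ex)

lemma ramsey_le: "goodN p E N \<Longrightarrow> ord_ramsey_K3 p E \<le> N"
  unfolding ord_ramsey_K3_def goodN_def by (rule Least_le)

lemma goodN_mono: assumes "goodN p E N" "N \<le> N'" shows "goodN p E N'"
  unfolding goodN_def
proof
  fix red :: "nat \<Rightarrow> nat \<Rightarrow> bool"
  from assms(1) have "has_red_copy p E N red \<or> has_blue_triangle N red" by (simp add: goodN_def)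
  then show "has_red_copy p E N' red \<or> has_blue_triangle N' red"
  proof
    assume "has_red_copy p E N red"
    then obtain \<phi> where h: "\<forall>u\<in>{1..p}. \<phi> u \<in> {1..N}" "strict_mono_on {1..p} \<phi>"
      "\<forall>u v. 1 \<le> u \<and> u < v \<and> v \<le> p \<and> E u v \<longrightarrow> red (\<phi> u) (\<phi> v)"
      unfolding has_red_copy_def by blast
    have "\<forall>u\<in>{1..p}. \<phi> u \<in> {1..N'}" using h(1) assms(2) by fastforce
    then have "has_red_copy p E N' red" unfolding has_red_copy_def using h(2,3) by blast
    then show ?thesis ..
  next
    assume "has_blue_triangle N red"
    then have "has_blue_triangle N' red" unfolding has_blue_triangle_def using assms(2) le_trans by blast
    then show ?thesis ..
  qed
qed



lemma cp_append_ex: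
  assumes "balanced X" "cp X red f S1" "cp Y red g S2" "\<forall>x\<in>S1. \<forall>y\<in>S2. x < y"
  shows "\<exists>h. cp (X @ Y) red h (S1 \<union> S2)"
  using cp_append[OF assms] by blast

lemma cp_wrap_ex:
  assumes "balanced W" "cp W red g S" "\<forall>x\<in>S. a < x \<and> x < b" "a < b" "red a b"
  shows "\<exists>h. cp (True # W @ [False]) red h (insert a (insert b S))"
  using cp_wrap[OF assms] by blast

lemma cp_block:
  assumes nb: "\<not> has_blue_triangle N red" and rs: "ord_ramsey_K3 (length X) (matched X) \<le> s"
    and vr: "\<forall>l\<in>{1..s}. v l \<in> {1..N}" and vm: "\<forall>l l'. 1 \<le> l \<and> l < l' \<and> l' \<le> s \<longrightarrow> v l < v l'"
  shows "\<exists>f. cp X red f (v ` {1..s})"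
proof -
  have g: "goodN (length X) (matched X) s" using goodN_mono[OF goodN_ramsey rs] .
  define red' where "red' i j = red (v i) (v j)" for i j
  have nb': "\<not> has_blue_triangle s red'"
  proof
    assume "has_blue_triangle s red'"
    then obtain a b c where abc: "1 \<le> a" "a < b" "b < c" "c \<le> s" "\<not> red' a b" "\<not> red' a c" "\<not> red' b c"
      unfolding has_blue_triangle_def by blast
    have "v a < v b" "v b < v c" using vm abc by auto
    moreover have "1 \<le> v a" "v c \<le> N" using vr abc by auto
    ultimately have "has_blue_triangle N red" unfolding has_blue_triangle_def
      using abc(5-7) unfolding red'_def by blast
    then show False using nb by simp
  qed
  then have "has_red_copy (length X) (matched X) s red'" using g unfolding goodN_def by blast
  then obtain \<psi> where p: "\<forall>u\<in>{1..length X}. \<psi> u \<in> {1..s}" "strict_mono_on {1..length X} \<psi>"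
      "\<forall>u w. 1 \<le> u \<and> u < w \<and> w \<le> length X \<and> matched X u w \<longrightarrow> red' (\<psi> u) (\<psi> w)"
    unfolding has_red_copy_def by blast
  have "cp X red (\<lambda>u. v (\<psi> u)) (v ` {1..s})" unfolding cp_def
  proof (intro conjI allI impI ballI)
    fix u assume "u \<in> {1..length X}"
    then show "v (\<psi> u) \<in> v ` {1..s}" using p(1) by blast
  next
    fix u w assume uw: "1 \<le> u \<and> u < w \<and> w \<le> length X"
    then have "\<psi> u < \<psi> w" using p(2) unfolding strict_mono_on_def by auto
    moreover have "\<psi> u \<in> {1..s}" "\<psi> w \<in> {1..s}" using p(1) uw by auto
    ultimately show "v (\<psi> u) < v (\<psi> w)" using vm by auto
  next
    fix u w assume m: "matched X u w"
    then have "1 \<le> u \<and> u < w \<and> w \<le> length X" by (simp add: matched_def)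
    then show "red (v (\<psi> u)) (v (\<psi> w))" using p(3) m unfolding red'_def by blast
  qed
  then show ?thesis by blast
qed

locale setting =
  fixes n N0 :: nat and \<phi> :: "nat \<Rightarrow> nat" and red :: "nat \<Rightarrow> nat \<Rightarrow> bool"
  assumes phr: "\<forall>u\<in>{1..2*n}. \<phi> u \<in> {1..N0}"
    and phm: "\<forall>u v. 1 \<le> u \<and> u < v \<and> v \<le> 2*n \<longrightarrow> \<phi> u < \<phi> v"
    and phe: "\<forall>u. 1 \<le> u \<and> u \<le> n \<longrightarrow> red (\<phi> u) (\<phi> (2*n+1-u))"
    and nb: "\<not> has_blue_triangle N0 red"
begin

lemma phi_block:
  assumes "c + s \<le> 2*n" "ord_ramsey_K3 (length X) (matched X) \<le> s"
  shows "\<exists>f. cp X red f (\<phi> ` {c+1..c+s})"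
proof -
  have "\<exists>f. cp X red f ((\<lambda>l. \<phi> (c + l)) ` {1..s})"
  proof (rule cp_block[OF nb assms(2)])
    show "\<forall>l\<in>{1..s}. \<phi> (c + l) \<in> {1..N0}" using phr assms(1) by auto
    show "\<forall>l l'. 1 \<le> l \<and> l < l' \<and> l' \<le> s \<longrightarrow> \<phi> (c + l) < \<phi> (c + l')" using phm assms(1) by auto
  qed
  moreover have "(\<lambda>l. \<phi> (c + l)) ` {1..s} = \<phi> ` {c+1..c+s}"
  proof
    show "(\<lambda>l. \<phi> (c + l)) ` {1..s} \<subseteq> \<phi> ` {c+1..c+s}" by auto
    show "\<phi> ` {c+1..c+s} \<subseteq> (\<lambda>l. \<phi> (c + l)) ` {1..s}"
    proof
      fix x assume "x \<in> \<phi> ` {c+1..c+s}"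
      then obtain u where u: "u \<in> {c+1..c+s}" "x = \<phi> u" by blast
      then have "u - c \<in> {1..s}" "x = \<phi> (c + (u - c))" by auto
      then show "x \<in> (\<lambda>l. \<phi> (c + l)) ` {1..s}" by blast
    qed
  qed
  ultimately show ?thesis by simp
qed

lemma phi_ord:
  assumes "h1 < l2" "1 \<le> l1" "h2 \<le> 2*n"
  shows "\<forall>x\<in>\<phi> ` {l1..h1}. \<forall>y\<in>\<phi> ` {l2..h2}. x < y"
  using assms phm by fastforce

lemma phi_between:
  assumes "a < l" "h < b" "1 \<le> a" "b \<le> 2*n"
  shows "\<forall>x\<in>\<phi> ` {l..h}. \<phi> a < x \<and> x < \<phi> b"
proof
  fix x assume "x \<in> \<phi> ` {l..h}"
  then obtain u where u: "u \<in> {l..h}" "x = \<phi> u" by blast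
  show "\<phi> a < x \<and> x < \<phi> b" using phm u assms by auto
qed

lemma claim:
  fixes k :: nat and A :: "nat \<Rightarrow> bool list" and s :: "nat \<Rightarrow> nat"
  assumes k1: "k \<ge> 1" and bal: "\<forall>i\<in>{1..2*k-1}. balanced (A i)"
    and sA: "\<forall>i\<in>{1..k}. ord_ramsey_K3 (length (A i)) (matched (A i)) \<le> s i \<and>
                        ord_ramsey_K3 (length (A (2*k-i))) (matched (A (2*k-i))) \<le> s i"
  shows "d \<le> k - 1 \<Longrightarrow> a + (\<Sum>i=k-d..k. 1 + s i) \<le> n \<Longrightarrow>
    balanced (nestB A k d) \<and> (\<exists>f. cp (nestB A k d) red f (\<phi> ` {a+1..2*n-a}))"
proof (induction d arbitrary: a)
  case 0
  then have an: "a + 1 + s k \<le> n" by simp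
  have bk: "balanced (A k)" using bal k1 by auto
  have rk: "ord_ramsey_K3 (length (A k)) (matched (A k)) \<le> s k" using sA k1 by auto
  obtain g where g: "cp (A k) red g (\<phi> ` {a+1+1..a+1+s k})"
    using phi_block[of "a+1" "s k" "A k"] an rk by auto
  have rng: "\<forall>x\<in>\<phi> ` {a+1+1..a+1+s k}. \<phi> (a+1) < x \<and> x < \<phi> (2*n-a)"
    using phi_between[of "a+1" "a+1+1" "a+1+s k" "2*n-a"] an by auto
  have ab: "\<phi> (a+1) < \<phi> (2*n-a)" using phm an by auto
  have r: "red (\<phi> (a+1)) (\<phi> (2*n-a))" using phe[rule_format, of "a+1"] an
    by (simp add: Suc_diff_le)
  obtain h where h: "cp (True # A k @ [False]) red h
      (insert (\<phi> (a+1)) (insert (\<phi> (2*n-a)) (\<phi> ` {a+1+1..a+1+s k})))"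
    using cp_wrap_ex[OF bk g rng ab r] by blast
  have sub: "insert (\<phi> (a+1)) (insert (\<phi> (2*n-a)) (\<phi> ` {a+1+1..a+1+s k})) \<subseteq> \<phi> ` {a+1..2*n-a}"
    using an by auto
  show ?case using cp_mono[OF h sub] balanced_wrap[OF bk] by auto
next
  case (Suc d)
  define j where "j = k - Suc d"
  define j' where "j' = k + Suc d"
  have dk: "Suc d \<le> k - 1" using Suc.prems by simp
  have j1: "1 \<le> j" "j \<le> k" using dk unfolding j_def by auto
  have jj: "2*k - j = j'" using dk unfolding j_def j'_def by auto
  have j'r: "j' \<in> {1..2*k-1}" using dk unfolding j'_def by auto
  have seq: "{k - Suc d..k} = insert j {k-d..k}" "j \<notin> {k-d..k}" using dk unfolding j_def by auto
  have sumeq: "(\<Sum>i=k - Suc d..k. 1 + s i) = (1 + s j) + (\<Sum>i=k-d..k. 1 + s i)"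
    unfolding seq(1) using seq(2) by simp
  define a' where "a' = a + 1 + s j"
  have an: "a' + (\<Sum>i=k-d..k. 1 + s i) \<le> n" using Suc.prems(2) sumeq unfolding a'_def by simp
  have sum1: "(\<Sum>i=k-d..k. 1 + s i) \<ge> 1"
  proof -
    have "k \<in> {k-d..k}" by simp
    then have "1 + s k \<le> (\<Sum>i=k-d..k. 1 + s i)" by (intro member_le_sum) auto
    then show ?thesis by simp
  qed
  have a'n: "a' + 1 \<le> n" using an sum1 by simp
  from Suc.IH[of a'] dk an obtain f' where IHb: "balanced (nestB A k d)"
    and f': "cp (nestB A k d) red f' (\<phi> ` {a'+1..2*n-a'})" by auto
  have bj: "balanced (A j)" "balanced (A j')" using bal j1 j'r by auto
  have rj: "ord_ramsey_K3 (length (A j)) (matched (A j)) \<le> s j"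
    "ord_ramsey_K3 (length (A j')) (matched (A j')) \<le> s j" using sA j1 jj by auto
  obtain g1 where g1: "cp (A j) red g1 (\<phi> ` {a+1+1..a+1+s j})"
    using phi_block[of "a+1" "s j" "A j"] a'n rj(1) unfolding a'_def by auto
  define c where "c = 2*n-a-1-s j"
  have cc: "c + s j = 2*n-a-1" "c = 2*n - a'" using a'n unfolding c_def a'_def by auto
  obtain g2 where g2: "cp (A j') red g2 (\<phi> ` {c+1..c+s j})"
    using phi_block[of c "s j" "A j'"] cc rj(2) by auto
  have o1: "\<forall>x\<in>\<phi> ` {a'+1..2*n-a'}. \<forall>y\<in>\<phi> ` {c+1..c+s j}. x < y"
    by (rule phi_ord) (use cc in auto)
  obtain h1 where h1: "cp (nestB A k d @ A j') red h1 (\<phi> ` {a'+1..2*n-a'} \<union> \<phi> ` {c+1..c+s j})"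
    using cp_append_ex[OF IHb f' g2 o1] by blast
  have p1: "\<forall>x\<in>\<phi> ` {a+1+1..a+1+s j}. \<forall>y\<in>\<phi> ` {a'+1..2*n-a'}. x < y"
    by (rule phi_ord) (use a'n in \<open>auto simp: a'_def\<close>)
  have p2: "\<forall>x\<in>\<phi> ` {a+1+1..a+1+s j}. \<forall>y\<in>\<phi> ` {c+1..c+s j}. x < y"
    by (rule phi_ord) (use a'n cc in \<open>auto simp: a'_def\<close>)
  have o2: "\<forall>x\<in>\<phi> ` {a+1+1..a+1+s j}. \<forall>y\<in>\<phi> ` {a'+1..2*n-a'} \<union> \<phi> ` {c+1..c+s j}. x < y"
    using p1 p2 by blast
  obtain h2 where h2: "cp (A j @ (nestB A k d @ A j')) red h2
      (\<phi> ` {a+1+1..a+1+s j} \<union> (\<phi> ` {a'+1..2*n-a'} \<union> \<phi> ` {c+1..c+s j}))"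
    using cp_append_ex[OF bj(1) g1 h1 o2] by blast
  let ?S = "\<phi> ` {a+1+1..a+1+s j} \<union> (\<phi> ` {a'+1..2*n-a'} \<union> \<phi> ` {c+1..c+s j})"
  have q1: "\<forall>x\<in>\<phi> ` {a+1+1..a+1+s j}. \<phi> (a+1) < x \<and> x < \<phi> (2*n-a)"
    by (rule phi_between) (use a'n in \<open>auto simp: a'_def\<close>)
  have q2: "\<forall>x\<in>\<phi> ` {a'+1..2*n-a'}. \<phi> (a+1) < x \<and> x < \<phi> (2*n-a)"
    by (rule phi_between) (use a'n in \<open>auto simp: a'_def\<close>)
  have q3: "\<forall>x\<in>\<phi> ` {c+1..c+s j}. \<phi> (a+1) < x \<and> x < \<phi> (2*n-a)"
    by (rule phi_between) (use a'n cc in \<open>auto simp: a'_def\<close>)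
  have rng: "\<forall>x\<in>?S. \<phi> (a+1) < x \<and> x < \<phi> (2*n-a)"
    using q1 q2 q3 by blast
  have ab: "\<phi> (a+1) < \<phi> (2*n-a)" using phm a'n unfolding a'_def by auto
  have r: "red (\<phi> (a+1)) (\<phi> (2*n-a))" using phe[rule_format, of "a+1"] a'n unfolding a'_def
    by (simp add: Suc_diff_le)
  have bW: "balanced (A j @ (nestB A k d @ A j'))"
    using balanced_append[OF bj(1) balanced_append[OF IHb bj(2)]] .
  obtain h where h: "cp (True # (A j @ (nestB A k d @ A j')) @ [False]) red h
      (insert (\<phi> (a+1)) (insert (\<phi> (2*n-a)) ?S))"
    using cp_wrap_ex[OF bW h2 rng ab r] by blast
  have i1: "{a+1+1..a+1+s j} \<subseteq> {a+1..2*n-a}" "{a'+1..2*n-a'} \<subseteq> {a+1..2*n-a}"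
    "{c+1..c+s j} \<subseteq> {a+1..2*n-a}" "a+1 \<in> {a+1..2*n-a}" "2*n-a \<in> {a+1..2*n-a}"
    using cc a'n by (auto simp: a'_def)
  have sub: "insert (\<phi> (a+1)) (insert (\<phi> (2*n-a)) ?S) \<subseteq> \<phi> ` {a+1..2*n-a}"
    using image_mono[OF i1(1), of \<phi>] image_mono[OF i1(2), of \<phi>] image_mono[OF i1(3), of \<phi>] i1(4,5)
    by blast
  have eq: "nestB A k (Suc d) = True # (A j @ (nestB A k d @ A j')) @ [False]"
    unfolding j_def j'_def by simp
  show ?case unfolding eq using cp_mono[OF h sub] balanced_wrap[OF bW] by blast
qed

end


lemma balanced_nestB:
  assumes k1: "k \<ge> 1" and bal: "\<forall>i\<in>{1..2*k-1}. balanced (A i)"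
  shows "d \<le> k - 1 \<Longrightarrow> balanced (nestB A k d)"
proof (induction d)
  case 0
  have "balanced (A k)" using bal k1 by auto
  then show ?case using balanced_wrap by simp
next
  case (Suc d)
  have ix: "k - Suc d \<in> {1..2*k-1}" "k + Suc d \<in> {1..2*k-1}" using Suc.prems by auto
  have b1: "balanced (A (k - Suc d))" "balanced (A (k + Suc d))" using bal ix by blast+
  have "balanced (A (k - Suc d) @ (nestB A k d @ A (k + Suc d)))"
    using balanced_append[OF b1(1) balanced_append[OF _ b1(2)]] Suc by simp
  then have "balanced (True # (A (k - Suc d) @ (nestB A k d @ A (k + Suc d))) @ [False])"
    by (rule balanced_wrap)
  then show ?case by simp
qed

theorem lemma2p3:
  fixes k :: nat and A :: "nat \<Rightarrow> bool list"
  assumes "k \<ge> 1"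
    and "\<forall>i\<in>{1..2*k-1}. balanced (A i)"
  shows "balanced (nestB A k (k - 1)) \<and>
    ord_ramsey_K3 (length (nestB A k (k - 1))) (matched (nestB A k (k - 1)))
      \<le> ord_ramsey_K3 (2 * (k + (\<Sum>i=1..k. max (ord_ramsey_K3 (length (A i)) (matched (A i)))
                                                 (ord_ramsey_K3 (length (A (2*k-i))) (matched (A (2*k-i)))))))
                      (nested_matching (k + (\<Sum>i=1..k. max (ord_ramsey_K3 (length (A i)) (matched (A i)))
                                                 (ord_ramsey_K3 (length (A (2*k-i))) (matched (A (2*k-i)))))))"
proof -
  note k1 = assms(1) and bal = assms(2)
  define s where "s i = max (ord_ramsey_K3 (length (A i)) (matched (A i)))
      (ord_ramsey_K3 (length (A (2*k-i))) (matched (A (2*k-i))))" for i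
  define t where "t = (\<Sum>i=1..k. s i)"
  define n where "n = k + t"
  define N0 where "N0 = ord_ramsey_K3 (2*n) (nested_matching n)"
  have sA: "\<forall>i\<in>{1..k}. ord_ramsey_K3 (length (A i)) (matched (A i)) \<le> s i \<and>
                        ord_ramsey_K3 (length (A (2*k-i))) (matched (A (2*k-i))) \<le> s i"
    by (simp add: s_def)
  have kk: "k - (k - 1) = 1" using k1 by simp
  have sumeq: "(\<Sum>i=k-(k-1)..k. 1 + s i) = n"
    unfolding kk n_def t_def sum.distrib by simp
  have balB: "balanced (nestB A k (k - 1))" using balanced_nestB[OF k1 bal] by simp
  have good: "goodN (length (nestB A k (k - 1))) (matched (nestB A k (k - 1))) N0"
    unfolding goodN_def
  proof
    fix red :: "nat \<Rightarrow> nat \<Rightarrow> bool"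
    show "has_red_copy (length (nestB A k (k - 1))) (matched (nestB A k (k - 1))) N0 red \<or> has_blue_triangle N0 red"
    proof (cases "has_blue_triangle N0 red")
      case True then show ?thesis by simp
    next
      case False
      have "has_red_copy (2*n) (nested_matching n) N0 red"
        using goodN_ramsey[of "2*n" "nested_matching n"] False unfolding goodN_def N0_def by blast
      then obtain \<phi> where p: "\<forall>u\<in>{1..2*n}. \<phi> u \<in> {1..N0}" "strict_mono_on {1..2*n} \<phi>"
        "\<forall>u v. 1 \<le> u \<and> u < v \<and> v \<le> 2*n \<and> nested_matching n u v \<longrightarrow> red (\<phi> u) (\<phi> v)"
        unfolding has_red_copy_def by blast
      interpret setting n N0 \<phi> red
      proof
        show "\<forall>u\<in>{1..2*n}. \<phi> u \<in> {1..N0}" by (rule p(1))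
        show "\<forall>u v. 1 \<le> u \<and> u < v \<and> v \<le> 2*n \<longrightarrow> \<phi> u < \<phi> v"
          using p(2) unfolding strict_mono_on_def by auto
        show "\<forall>u. 1 \<le> u \<and> u \<le> n \<longrightarrow> red (\<phi> u) (\<phi> (2*n+1-u))"
        proof (intro allI impI)
          fix u assume u: "1 \<le> u \<and> u \<le> n"
          then have "1 \<le> u \<and> u < 2*n+1-u \<and> 2*n+1-u \<le> 2*n \<and> nested_matching n u (2*n+1-u)"
            by (auto simp: nested_matching_def)
          then show "red (\<phi> u) (\<phi> (2*n+1-u))" using p(3) by blast
        qed
        show "\<not> has_blue_triangle N0 red" by (rule False)
      qed
      have "k - 1 \<le> k - 1" "0 + (\<Sum>i=k-(k-1)..k. 1 + s i) \<le> n" using sumeq by auto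
      then obtain f where f: "cp (nestB A k (k - 1)) red f (\<phi> ` {0+1..2*n-0})"
        using claim[OF k1 bal sA] by blast
      have "has_red_copy (length (nestB A k (k - 1))) (matched (nestB A k (k - 1))) N0 red"
        unfolding has_red_copy_def
      proof (intro exI conjI)
        show "\<forall>u\<in>{1..length (nestB A k (k - 1))}. f u \<in> {1..N0}"
          using f p(1) unfolding cp_def by fastforce
        show "strict_mono_on {1..length (nestB A k (k - 1))} f"
          using f unfolding cp_def strict_mono_on_def by auto
        show "\<forall>u v. 1 \<le> u \<and> u < v \<and> v \<le> length (nestB A k (k - 1)) \<and> matched (nestB A k (k - 1)) u v \<longrightarrow> red (f u) (f v)"
          using f unfolding cp_def by blast
      qed
      then show ?thesis ..
    qed
  qed
  have "ord_ramsey_K3 (length (nestB A k (k - 1))) (matched (nestB A k (k - 1))) \<le> N0"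
    using ramsey_le[OF good] .
  moreover have "N0 = ord_ramsey_K3 (2 * (k + (\<Sum>i=1..k. max (ord_ramsey_K3 (length (A i)) (matched (A i)))
                                                 (ord_ramsey_K3 (length (A (2*k-i))) (matched (A (2*k-i)))))))
                      (nested_matching (k + (\<Sum>i=1..k. max (ord_ramsey_K3 (length (A i)) (matched (A i)))
                                                 (ord_ramsey_K3 (length (A (2*k-i))) (matched (A (2*k-i)))))))"
    unfolding N0_def n_def t_def s_def ..
  ultimately show ?thesis using balB by simp
qed

end
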